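(* Suppose the e-values are valid, i.e. $\mathbb{E}[e_t\mid\mathcal{F}_{t-1}]\le1$ a.s. whenever $\theta_t=0$, and fix $d\in(0,1]$. (a) If the $\mathcal{F}_{t-1}$-measurable testing levels satisfy, a.s. for every $t\ge1$, $$\mathrm{mem\text{-}}\widehat{\mathrm{FDP}}^{\mathrm{LORD}}(t):=\sum_{j=1}^t\frac{\alpha_j}{dR^{\mathrm d}_{j-1}+1}\le\alpha,$$ then $\mathrm{mem\text{-}FDR}(t)\le\alpha$ for all $t$. (b) Let $(\lambda_t)_{t\ge1}$ be $(0,1)$-valued with each $\lambda_t$ $\mathcal{F}_{t-1}$-measurable, and define $$\mathrm{mem\text{-}}\widehat{\mathrm{FDP}}^{\mathrm{SAFFRON}}(t):=\sum_{j=1}^t\frac{\alpha_j}{dR^{\mathrm d}_{j-1}+1}\cdot\frac{\mathbb{1}\{e_j<1/\lambda_j\}}{1-\lambda_j}.$$ Then $\mathbb{E}[\mathrm{mem\text{-}}\widehat{\mathrm{FDP}}^{\mathrm{SAFFRON}}(t)]\ge\mathbb{E}[\mathrm{mem\text{-}FDP}^*(t)]$ for all $t$, where $\mathrm{mem\text{-}FDP}^*(t)=\sum_{j\in\mathcal{H}_0(t)}\alpha_j/(dR^{\mathrm d}_{j-1}+1)$; and if the testing levels satisfy $\mathrm{mem\text{-}}\widehat{\mathrm{FDP}}^{\mathrm{SAFFRON}}(t)\le\alpha$ a.s. for every $t$, then $\mathrm{mem\text{-}FDR}(t)\le\alpha$ for all $t$.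
   Context: Let $\alpha\in(0,1)$ be a target level. Hypotheses are indexed by $t=1,2,\dots$; $\theta_t\in\{0,1\}$ is a fixed (non-random) indicator with $\theta_t=0$ iff the $t$-th null hypothesis is true. $e_1,e_2,\dots$ are nonnegative random variables (e-values). Testing levels $\alpha_1,\alpha_2,\dots$ are nonnegative random variables and the decisions are $\delta_t=\mathbb{1}\{e_t\ge 1/\alpha_t\}$ (with $\delta_t=0$ when $\alpha_t=0$). Let $\mathcal{F}_t=\sigma(\delta_1,\dots,\delta_t)$, $\mathcal{F}_0$ trivial; each $\alpha_t$ is required to be $\mathcal{F}_{t-1}$-measurable. $\mathcal{H}_0(t)=\{j\le t:\theta_j=0\}$. For a decay parameter $d\in(0,1]$, $R^{\mathrm d}_t=\sum_{j=1}^t d^{t-j}\delta_j$ with $R^{\mathrm d}_0=0$, and the decaying-memory FDR is $\mathrm{mem\text{-}FDR}(t)=\mathbb{E}\big[\sum_{j\in\mathcal{H}_0(t)}d^{t-j}\delta_j\big/R^{\mathrm d}_t\big]$ with the convention $0/0=0$. *)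

theory Defs
  imports "HOL-Probability.Probability"
begin

definition decision :: "(nat \<Rightarrow> 'a \<Rightarrow> real) \<Rightarrow> (nat \<Rightarrow> 'a \<Rightarrow> real) \<Rightarrow> nat \<Rightarrow> 'a \<Rightarrow> real" where
  "decision e al t \<omega> = (if al t \<omega> > 0 \<and> e t \<omega> \<ge> 1 / al t \<omega> then 1 else 0)"

definition filt :: "'a measure \<Rightarrow> (nat \<Rightarrow> 'a \<Rightarrow> real) \<Rightarrow> nat \<Rightarrow> 'a measure" where
  "filt M X t = sigma (space M) (\<Union>j\<in>{1..t}. {X j -` B \<inter> space M | B. B \<in> sets borel})"

definition Rd :: "real \<Rightarrow> (nat \<Rightarrow> 'a \<Rightarrow> real) \<Rightarrow> nat \<Rightarrow> 'a \<Rightarrow> real" where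
  "Rd d X t \<omega> = (\<Sum>j\<in>{1..t}. d ^ (t - j) * X j \<omega>)"

text \<open>Decaying-memory FDR; null t means theta_t = 0. Division by 0 is 0 in Isabelle (0/0 = 0).\<close>
definition mem_FDR :: "'a measure \<Rightarrow> (nat \<Rightarrow> bool) \<Rightarrow> real \<Rightarrow> (nat \<Rightarrow> 'a \<Rightarrow> real) \<Rightarrow> nat \<Rightarrow> real" where
  "mem_FDR M null d X t = prob_space.expectation M
     (\<lambda>\<omega>. (\<Sum>j\<in>{j\<in>{1..t}. null j}. d ^ (t - j) * X j \<omega>) / Rd d X t \<omega>)"

definition mem_FDP_hat_LORD :: "real \<Rightarrow> (nat \<Rightarrow> 'a \<Rightarrow> real) \<Rightarrow> (nat \<Rightarrow> 'a \<Rightarrow> real) \<Rightarrow> nat \<Rightarrow> 'a \<Rightarrow> real" where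
  "mem_FDP_hat_LORD d X al t \<omega> = (\<Sum>j\<in>{1..t}. al j \<omega> / (d * Rd d X (j - 1) \<omega> + 1))"

definition mem_FDP_hat_SAFFRON :: "real \<Rightarrow> (nat \<Rightarrow> 'a \<Rightarrow> real) \<Rightarrow> (nat \<Rightarrow> 'a \<Rightarrow> real)
    \<Rightarrow> (nat \<Rightarrow> 'a \<Rightarrow> real) \<Rightarrow> (nat \<Rightarrow> 'a \<Rightarrow> real) \<Rightarrow> nat \<Rightarrow> 'a \<Rightarrow> real" where
  "mem_FDP_hat_SAFFRON d X e al lam t \<omega> =
     (\<Sum>j\<in>{1..t}. al j \<omega> / (d * Rd d X (j - 1) \<omega> + 1)
        * (if e j \<omega> < 1 / lam j \<omega> then 1 else 0) / (1 - lam j \<omega>))"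

definition mem_FDP_star :: "(nat \<Rightarrow> bool) \<Rightarrow> real \<Rightarrow> (nat \<Rightarrow> 'a \<Rightarrow> real) \<Rightarrow> (nat \<Rightarrow> 'a \<Rightarrow> real) \<Rightarrow> nat \<Rightarrow> 'a \<Rightarrow> real" where
  "mem_FDP_star null d X al t \<omega> = (\<Sum>j\<in>{j\<in>{1..t}. null j}. al j \<omega> / (d * Rd d X (j - 1) \<omega> + 1))"

end

theory Submission
  imports Defs
begin

lemma filt_gen_sub: "(\<Union>j\<in>{1..t}. {X j -` B \<inter> space M | B. B \<in> sets borel}) \<subseteq> Pow (space M)"
  by auto

lemma space_filt[simp]: "space (filt M X t) = space M"
  unfolding filt_def by (simp add: space_measure_of_conv)

lemma sets_filt: "sets (filt M X t) = sigma_sets (space M) (\<Union>j\<in>{1..t}. {X j -` B \<inter> space M | B. B \<in> sets borel})"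
  unfolding filt_def by (rule sets_measure_of[OF filt_gen_sub])

lemma filt_meas:
  assumes "1 \<le> j" "j \<le> t"
  shows "X j \<in> borel_measurable (filt M X t)"
proof (rule measurableI)
  fix B :: "real set" assume "B \<in> sets borel"
  then have "X j -` B \<inter> space M \<in> (\<Union>j\<in>{1..t}. {X j -` B \<inter> space M | B. B \<in> sets borel})"
    using assms by (intro UN_I[of j]) auto
  then show "X j -` B \<inter> space (filt M X t) \<in> sets (filt M X t)"
    unfolding sets_filt space_filt by (rule sigma_sets.Basic)
qed simp

lemma filt_subalg:
  assumes "\<And>j. 1 \<le> j \<Longrightarrow> j \<le> t \<Longrightarrow> X j \<in> borel_measurable M"
  shows "subalgebra M (filt M X t)"
proof -
  have "sigma_sets (space M) (\<Union>j\<in>{1..t}. {X j -` B \<inter> space M | B. B \<in> sets borel}) \<subseteq> sets M"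
  proof (rule sets.sigma_sets_subset)
    show "(\<Union>j\<in>{1..t}. {X j -` B \<inter> space M | B. B \<in> sets borel}) \<subseteq> sets M"
      using assms by (auto intro!: measurable_sets)
  qed
  then show ?thesis unfolding subalgebra_def sets_filt by simp
qed

lemma filt_mono:
  assumes "s \<le> t"
  shows "sets (filt M X s) \<subseteq> sets (filt M X t)"
  unfolding sets_filt
proof (rule sigma_sets_subseteq, safe)
  fix j B assume "j \<in> {1..s}" "B \<in> sets (borel :: real measure)"
  then show "X j -` B \<inter> space M \<in> (\<Union>j\<in>{1..t}. {X j -` B \<inter> space M | B. B \<in> sets borel})"
    using assms by (intro UN_I[of j]) auto
qed

lemma Rd_Suc: "Rd d X (Suc k) \<omega> = d * Rd d X k \<omega> + X (Suc k) \<omega>"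
proof -
  have e: "{1..Suc k} = insert (Suc k) {1..k}" by auto
  have "Rd d X (Suc k) \<omega> = X (Suc k) \<omega> + (\<Sum>j\<in>{1..k}. d ^ (Suc k - j) * X j \<omega>)"
    unfolding Rd_def e by (subst sum.insert) auto
  also have "(\<Sum>j\<in>{1..k}. d ^ (Suc k - j) * X j \<omega>) = (\<Sum>j\<in>{1..k}. d * (d ^ (k - j) * X j \<omega>))"
  proof (rule sum.cong)
    fix j assume "j \<in> {1..k}"
    then have "Suc k - j = Suc (k - j)" by auto
    then show "d ^ (Suc k - j) * X j \<omega> = d * (d ^ (k - j) * X j \<omega>)" by simp
  qed simp
  also have "\<dots> = d * Rd d X k \<omega>" unfolding Rd_def sum_distrib_left ..
  finally show ?thesis by simp
qed

lemma Rd_nonneg: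
  assumes "\<And>j. 0 \<le> X j \<omega>" "0 \<le> d"
  shows "0 \<le> Rd d X t \<omega>"
  unfolding Rd_def using assms by (intro sum_nonneg mult_nonneg_nonneg) auto

lemma Rd_ge:
  assumes "\<And>j. 0 \<le> X j \<omega>" "0 \<le> d" "j \<le> t"
  shows "d ^ (t - j) * Rd d X j \<omega> \<le> Rd d X t \<omega>"
  using assms(3)
proof (induction t)
  case 0
  then show ?case by simp
next
  case (Suc t)
  show ?case
  proof (cases "j = Suc t")
    case True
    then show ?thesis by simp
  next
    case False
    then have jt: "j \<le> t" using Suc.prems by simp
    then have "d ^ (Suc t - j) * Rd d X j \<omega> = d * (d ^ (t - j) * Rd d X j \<omega>)"
      by (simp add: Suc_diff_le)
    also have "\<dots> \<le> d * Rd d X t \<omega>"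
      using Suc.IH[OF jt] assms(2) by (rule mult_left_mono)
    also have "\<dots> \<le> Rd d X (Suc t) \<omega>"
      unfolding Rd_Suc using assms(1) by simp
    finally show ?thesis .
  qed
qed

lemma FDP_pointwise:
  fixes X a E :: "nat \<Rightarrow> 'a \<Rightarrow> real"
  assumes X01: "\<And>j. X j \<omega> = 0 \<or> X j \<omega> = 1"
    and d: "0 < d" "d \<le> 1"
    and a: "\<And>j. 0 \<le> a j \<omega>" and E: "\<And>j. 0 \<le> E j \<omega>"
    and XaE: "\<And>j. X j \<omega> \<le> a j \<omega> * E j \<omega>"
    and N: "N \<subseteq> {1..t}"
  shows "(\<Sum>j\<in>N. d ^ (t - j) * X j \<omega>) / Rd d X t \<omega>
          \<le> (\<Sum>j\<in>N. a j \<omega> / (d * Rd d X (j - 1) \<omega> + 1) * E j \<omega>)"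
proof -
  have Xnn: "\<And>j. 0 \<le> X j \<omega>" using X01 by (metis order_refl zero_le_one)
  have Rnn: "\<And>k. 0 \<le> Rd d X k \<omega>" using Rd_nonneg[of X \<omega> d] Xnn d by simp
  have "(\<Sum>j\<in>N. d ^ (t - j) * X j \<omega>) / Rd d X t \<omega> = (\<Sum>j\<in>N. d ^ (t - j) * X j \<omega> / Rd d X t \<omega>)"
    by (rule sum_divide_distrib)
  also have "\<dots> \<le> (\<Sum>j\<in>N. a j \<omega> / (d * Rd d X (j - 1) \<omega> + 1) * E j \<omega>)"
  proof (rule sum_mono)
    fix j assume "j \<in> N"
    then have j: "1 \<le> j" "j \<le> t" using N by auto
    have den: "0 < d * Rd d X (j - 1) \<omega> + 1" using Rnn[of "j - 1"] d by (simp add: add_nonneg_pos)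
    show "d ^ (t - j) * X j \<omega> / Rd d X t \<omega> \<le> a j \<omega> / (d * Rd d X (j - 1) \<omega> + 1) * E j \<omega>"
    proof (cases "X j \<omega> = 0")
      case True
      then show ?thesis using a E den by simp
    next
      case False
      then have X1: "X j \<omega> = 1" using X01 by blast
      have "Rd d X j \<omega> = d * Rd d X (j - 1) \<omega> + 1"
        using Rd_Suc[of d X "j - 1" \<omega>] j X1 by simp
      then have ge: "d ^ (t - j) * (d * Rd d X (j - 1) \<omega> + 1) \<le> Rd d X t \<omega>"
        using Rd_ge[of X \<omega> d j t] Xnn d j by simp
      have dp: "0 < d ^ (t - j)" using d by simp
      then have Rpos: "0 < Rd d X t \<omega>" using ge den by (smt (verit) mult_pos_pos)
      have "d ^ (t - j) * X j \<omega> / Rd d X t \<omega> \<le> 1 / (d * Rd d X (j - 1) \<omega> + 1)"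
        using ge Rpos den X1 by (simp add: divide_simps mult.commute)
      also have "\<dots> \<le> a j \<omega> * E j \<omega> / (d * Rd d X (j - 1) \<omega> + 1)"
        using XaE[of j] X1 den by (simp add: divide_right_mono)
      finally show ?thesis by simp
    qed
  qed
  finally show ?thesis .
qed

lemma ennreal_aux:
  "(c::ennreal) + c' = 1 \<Longrightarrow> c' \<le> ennreal l \<Longrightarrow> 0 < l \<Longrightarrow> l < 1 \<Longrightarrow> ennreal (1 - l) \<le> c"
  by (smt (verit, ccfv_threshold) ennreal_1 ennreal_add_diff_cancel_right
    ennreal_add_eq_top ennreal_minus ennreal_minus_mono ennreal_top_neq_one
    le_numeral_extra(4))

locale fdr_setup = prob_space M
  for M :: "'a measure" +
  fixes null :: "nat \<Rightarrow> bool" and e al :: "nat \<Rightarrow> 'a \<Rightarrow> real" and d :: real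
  assumes d: "0 < d" "d \<le> 1"
    and e_meas: "\<And>t. e t \<in> borel_measurable M"
    and e_nonneg: "\<And>t \<omega>. \<omega> \<in> space M \<Longrightarrow> 0 \<le> e t \<omega>"
    and al_meas: "\<And>t. t \<ge> 1 \<Longrightarrow> al t \<in> borel_measurable (filt M (decision e al) (t - 1))"
    and al_nonneg: "\<And>t \<omega>. \<omega> \<in> space M \<Longrightarrow> 0 \<le> al t \<omega>"
    and valid: "\<And>t. t \<ge> 1 \<Longrightarrow> null t \<Longrightarrow>
        AE \<omega> in M. nn_cond_exp M (filt M (decision e al) (t - 1)) (\<lambda>x. ennreal (e t x)) \<omega> \<le> 1"
begin

abbreviation "dl \<equiv> decision e al"
abbreviation "FF \<equiv> filt M dl"

lemma dl01: "dl j \<omega> = 0 \<or> dl j \<omega> = 1"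
  unfolding decision_def by auto

lemma dl_nonneg: "0 \<le> dl j \<omega>"
  unfolding decision_def by auto

lemma dl_le: "\<omega> \<in> space M \<Longrightarrow> dl j \<omega> \<le> al j \<omega> * e j \<omega>"
  unfolding decision_def using al_nonneg e_nonneg
  by (auto simp: field_simps mult_nonneg_nonneg)

lemma dl_meas: "1 \<le> t \<Longrightarrow> dl t \<in> borel_measurable M"
proof (induction t rule: less_induct)
  case (less t)
  have "subalgebra M (FF (t - 1))"
    by (rule filt_subalg) (use less in auto)
  then have [measurable]: "al t \<in> borel_measurable M"
    using measurable_from_subalg al_meas less.prems by blast
  have [measurable]: "e t \<in> borel_measurable M" by (rule e_meas)
  show ?case unfolding decision_def by measurable
qed

lemma subalg: "subalgebra M (FF t)"
  by (rule filt_subalg) (use dl_meas in auto)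

lemma sfs: "sigma_finite_subalgebra M (FF t)"
proof -
  have "finite_measure_subalgebra M (FF t)"
    by (intro finite_measure_subalgebra.intro finite_measure_subalgebra_axioms.intro subalg)
       (rule finite_measure_axioms)
  then show ?thesis by (rule finite_measure_subalgebra_is_sigma_finite)
qed

lemma Rd_meas: "Rd d dl k \<in> borel_measurable (FF k)"
  unfolding Rd_def
  by (intro borel_measurable_sum borel_measurable_times borel_measurable_const filt_meas) auto

lemma Rd_nn: "0 \<le> Rd d dl k \<omega>"
  using Rd_nonneg[of dl \<omega> d k] dl_nonneg d by simp

definition g :: "nat \<Rightarrow> 'a \<Rightarrow> real" where
  "g j \<omega> = al j \<omega> / (d * Rd d dl (j - 1) \<omega> + 1)"

lemma g_nonneg: "\<omega> \<in> space M \<Longrightarrow> 0 \<le> g j \<omega>"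
  unfolding g_def using al_nonneg Rd_nn d by (simp add: add_nonneg_pos)

lemma g_measF: "1 \<le> j \<Longrightarrow> g j \<in> borel_measurable (FF (j - 1))"
  unfolding g_def
  by (intro borel_measurable_divide borel_measurable_add borel_measurable_times
      borel_measurable_const Rd_meas al_meas)

lemma g_meas: "1 \<le> j \<Longrightarrow> g j \<in> borel_measurable M"
  using measurable_from_subalg[OF subalg g_measF] by blast

lemma K:
  assumes j: "1 \<le> j" "null j" and h: "h \<in> borel_measurable (FF (j - 1))"
  shows "(\<integral>\<^sup>+ x. h x * ennreal (e j x) \<partial>M) \<le> (\<integral>\<^sup>+ x. h x \<partial>M)"
proof -
  interpret sigma_finite_subalgebra M "FF (j - 1)" by (rule sfs)
  have em: "(\<lambda>x. ennreal (e j x)) \<in> borel_measurable M" using e_meas by measurable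
  have "(\<integral>\<^sup>+ x. h x * ennreal (e j x) \<partial>M)
      = (\<integral>\<^sup>+ x. h x * nn_cond_exp M (FF (j - 1)) (\<lambda>x. ennreal (e j x)) x \<partial>M)"
    by (rule nn_cond_exp_intg[symmetric, OF h em])
  also have "\<dots> \<le> (\<integral>\<^sup>+ x. h x * 1 \<partial>M)"
  proof (rule nn_integral_mono_AE)
    show "AE x in M. h x * nn_cond_exp M (FF (j - 1)) (\<lambda>x. ennreal (e j x)) x \<le> h x * 1"
      using valid[OF j] by eventually_elim (rule mult_left_mono, auto)
  qed
  finally show ?thesis by simp
qed

lemma S:
  assumes j: "1 \<le> j" "null j"
    and lm: "lm \<in> borel_measurable (FF (j - 1))"
    and lb: "\<And>\<omega>. \<omega> \<in> space M \<Longrightarrow> 0 < lm \<omega> \<and> lm \<omega> < 1"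
    and hm: "h \<in> borel_measurable (FF (j - 1))"
  shows "(\<integral>\<^sup>+ x. ennreal (h x) * ennreal (1 - lm x) \<partial>M)
       \<le> (\<integral>\<^sup>+ x. ennreal (h x) * ennreal (if e j x < 1 / lm x then 1 else 0) \<partial>M)"
proof -
  let ?F = "FF (j - 1)"
  interpret sigma_finite_subalgebra M ?F by (rule sfs)
  have [measurable]: "lm \<in> borel_measurable M" using measurable_from_subalg[OF subalg lm] .
  have [measurable]: "e j \<in> borel_measurable M" by (rule e_meas)
  have [measurable]: "lm \<in> borel_measurable ?F" by (rule lm)
  have [measurable]: "h \<in> borel_measurable ?F" by (rule hm)
  define Il where "Il = (\<lambda>x. ennreal (if e j x < 1 / lm x then 1 else 0))"
  define Ig where "Ig = (\<lambda>x. ennreal (if e j x < 1 / lm x then 0 else 1))"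
  have [measurable]: "Il \<in> borel_measurable M" "Ig \<in> borel_measurable M"
    unfolding Il_def Ig_def by measurable
  have one: "(\<lambda>x. Il x + Ig x) = (\<lambda>x. 1)" unfolding Il_def Ig_def by auto
  have A1: "AE x in M. nn_cond_exp M ?F Il x + nn_cond_exp M ?F Ig x = nn_cond_exp M ?F (\<lambda>x. 1) x"
    using nn_cond_exp_sum[of Il Ig] unfolding one by simp
  have A3: "AE x in M. 1 = nn_cond_exp M ?F (\<lambda>x. 1) x"
    by (rule nn_cond_exp_F_meas) simp
  have "AE x in M. Ig x \<le> ennreal (lm x) * ennreal (e j x)"
  proof (rule AE_I2)
    fix x assume x: "x \<in> space M"
    show "Ig x \<le> ennreal (lm x) * ennreal (e j x)"
    proof (cases "e j x < 1 / lm x")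
      case True then show ?thesis unfolding Ig_def by simp
    next
      case False
      then have "1 \<le> lm x * e j x" using lb[OF x] by (simp add: field_simps)
      then show ?thesis unfolding Ig_def using False lb[OF x] e_nonneg[OF x]
        by (simp add: ennreal_mult[symmetric])
    qed
  qed
  then have A4: "AE x in M. nn_cond_exp M ?F Ig x \<le> nn_cond_exp M ?F (\<lambda>x. ennreal (lm x) * ennreal (e j x)) x"
    by (rule nn_cond_exp_mono) measurable
  have A5: "AE x in M. ennreal (lm x) * nn_cond_exp M ?F (\<lambda>x. ennreal (e j x)) x = nn_cond_exp M ?F (\<lambda>x. ennreal (lm x) * ennreal (e j x)) x"
    by (rule nn_cond_exp_prod) measurable
  have A6: "AE x in M. nn_cond_exp M ?F (\<lambda>x. ennreal (e j x)) x \<le> 1" by (rule valid[OF j])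
  have key: "AE x in M. ennreal (1 - lm x) \<le> nn_cond_exp M ?F Il x"
    using AE_space A1 A3 A4 A5 A6
  proof eventually_elim
    case (elim x)
    let ?c = "nn_cond_exp M ?F Il x" and ?c' = "nn_cond_exp M ?F Ig x"
      and ?ce = "nn_cond_exp M ?F (\<lambda>x. ennreal (e j x)) x"
    have "?c' \<le> ennreal (lm x) * ?ce" using elim by simp
    also have "\<dots> \<le> ennreal (lm x)" using elim(6) by (metis mult.right_neutral mult_left_mono zero_le)
    finally have c': "?c' \<le> ennreal (lm x)" .
    have sum1: "?c + ?c' = 1" using elim by simp
    show ?case using ennreal_aux[OF sum1 c'] lb[OF elim(1)] by simp
  qed
  have "(\<integral>\<^sup>+ x. ennreal (h x) * ennreal (1 - lm x) \<partial>M) \<le> (\<integral>\<^sup>+ x. ennreal (h x) * nn_cond_exp M ?F Il x \<partial>M)"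
  proof (rule nn_integral_mono_AE)
    show "AE x in M. ennreal (h x) * ennreal (1 - lm x) \<le> ennreal (h x) * nn_cond_exp M ?F Il x"
      using key by eventually_elim (rule mult_left_mono, auto)
  qed
  also have "\<dots> = (\<integral>\<^sup>+ x. ennreal (h x) * Il x \<partial>M)"
    by (rule nn_cond_exp_intg) measurable
  finally show ?thesis unfolding Il_def .
qed

definition FDP :: "nat \<Rightarrow> 'a \<Rightarrow> real" where
  "FDP t x = (\<Sum>j\<in>{j\<in>{1..t}. null j}. d ^ (t - j) * dl j x) / Rd d dl t x"

lemma star_eq: "mem_FDP_star null d dl al t x = (\<Sum>j\<in>{j\<in>{1..t}. null j}. g j x)"
  unfolding mem_FDP_star_def g_def ..

lemma A: "(\<integral>\<^sup>+ x. ennreal (FDP t x) \<partial>M) \<le> (\<integral>\<^sup>+ x. ennreal (mem_FDP_star null d dl al t x) \<partial>M)"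
proof -
  let ?N = "{j\<in>{1..t}. null j}"
  have fin: "finite ?N" by simp
  have "(\<integral>\<^sup>+ x. ennreal (FDP t x) \<partial>M) \<le> (\<integral>\<^sup>+ x. (\<Sum>j\<in>?N. ennreal (g j x) * ennreal (e j x)) \<partial>M)"
  proof (rule nn_integral_mono)
    fix x assume x: "x \<in> space M"
    have "FDP t x \<le> (\<Sum>j\<in>?N. al j x / (d * Rd d dl (j - 1) x + 1) * e j x)"
      unfolding FDP_def
      by (rule FDP_pointwise[of dl x d al e ?N t]) (use dl01 d al_nonneg[OF x] e_nonneg[OF x] dl_le[OF x] in auto)
    also have "\<dots> = (\<Sum>j\<in>?N. g j x * e j x)" unfolding g_def ..
    finally have "ennreal (FDP t x) \<le> ennreal (\<Sum>j\<in>?N. g j x * e j x)" by (rule ennreal_leI)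
    also have "\<dots> = (\<Sum>j\<in>?N. ennreal (g j x) * ennreal (e j x))"
      using g_nonneg[OF x] e_nonneg[OF x]
      by (subst sum_ennreal[symmetric]) (auto simp: ennreal_mult)
    finally show "ennreal (FDP t x) \<le> (\<Sum>j\<in>?N. ennreal (g j x) * ennreal (e j x))" .
  qed
  also have "\<dots> = (\<Sum>j\<in>?N. (\<integral>\<^sup>+ x. ennreal (g j x) * ennreal (e j x) \<partial>M))"
  proof (rule nn_integral_sum)
    fix j assume "j \<in> ?N"
    then have [measurable]: "g j \<in> borel_measurable M" using g_meas by auto
    have [measurable]: "e j \<in> borel_measurable M" by (rule e_meas)
    show "(\<lambda>x. ennreal (g j x) * ennreal (e j x)) \<in> borel_measurable M" by measurable
  qed
  also have "\<dots> \<le> (\<Sum>j\<in>?N. (\<integral>\<^sup>+ x. ennreal (g j x) \<partial>M))"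
  proof (rule sum_mono)
    fix j assume "j \<in> ?N"
    then have j: "1 \<le> j" "null j" by auto
    have [measurable]: "g j \<in> borel_measurable (FF (j - 1))" using g_measF j by auto
    show "(\<integral>\<^sup>+ x. ennreal (g j x) * ennreal (e j x) \<partial>M) \<le> (\<integral>\<^sup>+ x. ennreal (g j x) \<partial>M)"
      by (rule K[OF j]) measurable
  qed
  also have "\<dots> = (\<integral>\<^sup>+ x. (\<Sum>j\<in>?N. ennreal (g j x)) \<partial>M)"
  proof (rule nn_integral_sum[symmetric])
    fix j assume "j \<in> ?N"
    then have [measurable]: "g j \<in> borel_measurable M" using g_meas by auto
    show "(\<lambda>x. ennreal (g j x)) \<in> borel_measurable M" by measurable
  qed
  also have "\<dots> = (\<integral>\<^sup>+ x. ennreal (mem_FDP_star null d dl al t x) \<partial>M)"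
  proof (rule nn_integral_cong)
    fix x assume x: "x \<in> space M"
    show "(\<Sum>j\<in>?N. ennreal (g j x)) = ennreal (mem_FDP_star null d dl al t x)"
      unfolding star_eq using g_nonneg[OF x] by (subst sum_ennreal) auto
  qed
  finally show ?thesis .
qed

lemma FDR_eq: "mem_FDR M null d dl t = enn2real (\<integral>\<^sup>+ x. ennreal (FDP t x) \<partial>M)"
proof -
  have [measurable]: "Rd d dl t \<in> borel_measurable M"
    using measurable_from_subalg[OF subalg Rd_meas] by blast
  have "(\<lambda>x. (\<Sum>j\<in>{j\<in>{1..t}. null j}. d ^ (t - j) * dl j x)) \<in> borel_measurable M"
    by (intro borel_measurable_sum borel_measurable_times borel_measurable_const dl_meas) auto
  then have m: "FDP t \<in> borel_measurable M" unfolding FDP_def[abs_def] by measurable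
  have nn: "AE x in M. 0 \<le> FDP t x"
    unfolding FDP_def using Rd_nn dl_nonneg d
    by (intro AE_I2 divide_nonneg_nonneg sum_nonneg mult_nonneg_nonneg) auto
  have "mem_FDR M null d dl t = integral\<^sup>L M (FDP t)"
    unfolding mem_FDR_def FDP_def[abs_def] ..
  also have "\<dots> = enn2real (\<integral>\<^sup>+ x. ennreal (FDP t x) \<partial>M)"
    by (rule integral_eq_nn_integral[OF m nn])
  finally show ?thesis .
qed

lemma FDR_le:
  assumes "0 < \<alpha>" "(\<integral>\<^sup>+ x. ennreal (mem_FDP_star null d dl al t x) \<partial>M) \<le> ennreal \<alpha>"
  shows "mem_FDR M null d dl t \<le> \<alpha>"
  unfolding FDR_eq using assms A[of t] by (intro enn2real_leI) auto

lemma int_le_const: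
  assumes "AE x in M. f x \<le> \<alpha>"
  shows "(\<integral>\<^sup>+ x. ennreal (f x) \<partial>M) \<le> ennreal \<alpha>"
proof -
  have "(\<integral>\<^sup>+ x. ennreal (f x) \<partial>M) \<le> (\<integral>\<^sup>+ x. ennreal \<alpha> \<partial>M)"
    by (rule nn_integral_mono_AE) (use assms in \<open>auto intro: ennreal_leI\<close>)
  also have "\<dots> = ennreal \<alpha>" by (simp add: emeasure_space_1)
  finally show ?thesis .
qed

lemma star_zero: "mem_FDP_star null d dl al 0 x = 0"
  unfolding mem_FDP_star_def by simp

lemma partA:
  assumes "0 < \<alpha>" "\<forall>t\<ge>1. AE \<omega> in M. mem_FDP_hat_LORD d dl al t \<omega> \<le> \<alpha>"
  shows "mem_FDR M null d dl t \<le> \<alpha>"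
proof (rule FDR_le[OF assms(1)])
  show "(\<integral>\<^sup>+ x. ennreal (mem_FDP_star null d dl al t x) \<partial>M) \<le> ennreal \<alpha>"
  proof (cases "t = 0")
    case True
    then show ?thesis by (simp add: star_zero)
  next
    case False
    have L: "AE x in M. mem_FDP_hat_LORD d dl al t x \<le> \<alpha>" using assms(2) False by simp
    have "AE x in M. mem_FDP_star null d dl al t x \<le> \<alpha>"
      using AE_space L
    proof eventually_elim
      case (elim x)
      have "mem_FDP_star null d dl al t x \<le> mem_FDP_hat_LORD d dl al t x"
        unfolding star_eq mem_FDP_hat_LORD_def g_def[symmetric]
        by (rule sum_mono2) (use g_nonneg[OF elim(1)] in auto)
      then show ?case using elim by simp
    qed
    then show ?thesis by (rule int_le_const)
  qed
qed

lemma partB1: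
  assumes lam_meas: "\<And>t. 1 \<le> t \<Longrightarrow> lam t \<in> borel_measurable (FF (t - 1))"
    and lam_b: "\<And>t \<omega>. 1 \<le> t \<Longrightarrow> \<omega> \<in> space M \<Longrightarrow> 0 < lam t \<omega> \<and> lam t \<omega> < 1"
  shows "(\<integral>\<^sup>+ x. ennreal (mem_FDP_star null d dl al t x) \<partial>M)
       \<le> (\<integral>\<^sup>+ x. ennreal (mem_FDP_hat_SAFFRON d dl e al lam t x) \<partial>M)"
proof -
  let ?N = "{j\<in>{1..t}. null j}"
  define sf where "sf j x = g j x * (if e j x < 1 / lam j x then 1 else 0) / (1 - lam j x)" for j x
  have sf_nn: "0 \<le> sf j x" if "1 \<le> j" "x \<in> space M" for j x
    unfolding sf_def using g_nonneg[OF that(2)] lam_b[OF that] by auto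
  have sf_meas: "(\<lambda>x. ennreal (sf j x)) \<in> borel_measurable M" if "1 \<le> j" for j
  proof -
    have [measurable]: "g j \<in> borel_measurable M" using g_meas that .
    have [measurable]: "lam j \<in> borel_measurable M"
      using measurable_from_subalg[OF subalg lam_meas[OF that]] .
    have [measurable]: "e j \<in> borel_measurable M" by (rule e_meas)
    show ?thesis unfolding sf_def by measurable
  qed
  have "(\<integral>\<^sup>+ x. ennreal (mem_FDP_star null d dl al t x) \<partial>M) = (\<integral>\<^sup>+ x. (\<Sum>j\<in>?N. ennreal (g j x)) \<partial>M)"
  proof (rule nn_integral_cong)
    fix x assume x: "x \<in> space M"
    show "ennreal (mem_FDP_star null d dl al t x) = (\<Sum>j\<in>?N. ennreal (g j x))"
      unfolding star_eq using g_nonneg[OF x] by (subst sum_ennreal) auto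
  qed
  also have "\<dots> = (\<Sum>j\<in>?N. (\<integral>\<^sup>+ x. ennreal (g j x) \<partial>M))"
  proof (rule nn_integral_sum)
    fix j assume "j \<in> ?N"
    then have [measurable]: "g j \<in> borel_measurable M" using g_meas by auto
    show "(\<lambda>x. ennreal (g j x)) \<in> borel_measurable M" by measurable
  qed
  also have "\<dots> \<le> (\<Sum>j\<in>?N. (\<integral>\<^sup>+ x. ennreal (sf j x) \<partial>M))"
  proof (rule sum_mono)
    fix j assume "j \<in> ?N"
    then have j: "1 \<le> j" "null j" by auto
    define h where "h x = g j x / (1 - lam j x)" for x
    have [measurable]: "g j \<in> borel_measurable (FF (j - 1))" using g_measF j by auto
    have [measurable]: "lam j \<in> borel_measurable (FF (j - 1))" using lam_meas j by auto
    have hm: "h \<in> borel_measurable (FF (j - 1))" unfolding h_def[abs_def] by measurable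
    have "(\<integral>\<^sup>+ x. ennreal (g j x) \<partial>M) = (\<integral>\<^sup>+ x. ennreal (h x) * ennreal (1 - lam j x) \<partial>M)"
    proof (rule nn_integral_cong)
      fix x assume x: "x \<in> space M"
      have l: "0 < lam j x" "lam j x < 1" using lam_b[OF j(1) x] by auto
      have "g j x = h x * (1 - lam j x)" unfolding h_def using l by simp
      moreover have "0 \<le> h x" unfolding h_def using l g_nonneg[OF x] by simp
      ultimately show "ennreal (g j x) = ennreal (h x) * ennreal (1 - lam j x)"
        using l by (simp add: ennreal_mult)
    qed
    also have "\<dots> \<le> (\<integral>\<^sup>+ x. ennreal (h x) * ennreal (if e j x < 1 / lam j x then 1 else 0) \<partial>M)"
      by (rule S[OF j lam_meas[OF j(1)] lam_b[OF j(1)] hm])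
    also have "\<dots> = (\<integral>\<^sup>+ x. ennreal (sf j x) \<partial>M)"
    proof (rule nn_integral_cong)
      fix x assume x: "x \<in> space M"
      have l: "0 < lam j x" "lam j x < 1" using lam_b[OF j(1) x] by auto
      have "0 \<le> h x" unfolding h_def using l g_nonneg[OF x] by simp
      then show "ennreal (h x) * ennreal (if e j x < 1 / lam j x then 1 else 0) = ennreal (sf j x)"
        unfolding sf_def h_def by (simp add: ennreal_mult[symmetric])
    qed
    finally show "(\<integral>\<^sup>+ x. ennreal (g j x) \<partial>M) \<le> (\<integral>\<^sup>+ x. ennreal (sf j x) \<partial>M)" .
  qed
  also have "\<dots> \<le> (\<Sum>j\<in>{1..t}. (\<integral>\<^sup>+ x. ennreal (sf j x) \<partial>M))"
    by (rule sum_mono2) auto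
  also have "\<dots> = (\<integral>\<^sup>+ x. (\<Sum>j\<in>{1..t}. ennreal (sf j x)) \<partial>M)"
    by (rule nn_integral_sum[symmetric]) (use sf_meas in auto)
  also have "\<dots> = (\<integral>\<^sup>+ x. ennreal (mem_FDP_hat_SAFFRON d dl e al lam t x) \<partial>M)"
  proof (rule nn_integral_cong)
    fix x assume x: "x \<in> space M"
    have "(\<Sum>j\<in>{1..t}. ennreal (sf j x)) = ennreal (\<Sum>j\<in>{1..t}. sf j x)"
      using sf_nn x by (subst sum_ennreal) auto
    also have "(\<Sum>j\<in>{1..t}. sf j x) = mem_FDP_hat_SAFFRON d dl e al lam t x"
      unfolding sf_def g_def mem_FDP_hat_SAFFRON_def ..
    finally show "(\<Sum>j\<in>{1..t}. ennreal (sf j x)) = ennreal (mem_FDP_hat_SAFFRON d dl e al lam t x)" .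
  qed
  finally show ?thesis .
qed

lemma partB2:
  assumes "0 < \<alpha>"
    and lam_meas: "\<And>t. 1 \<le> t \<Longrightarrow> lam t \<in> borel_measurable (FF (t - 1))"
    and lam_b: "\<And>t \<omega>. 1 \<le> t \<Longrightarrow> \<omega> \<in> space M \<Longrightarrow> 0 < lam t \<omega> \<and> lam t \<omega> < 1"
    and bound: "\<forall>t\<ge>1. AE \<omega> in M. mem_FDP_hat_SAFFRON d dl e al lam t \<omega> \<le> \<alpha>"
  shows "mem_FDR M null d dl t \<le> \<alpha>"
proof (rule FDR_le[OF assms(1)])
  show "(\<integral>\<^sup>+ x. ennreal (mem_FDP_star null d dl al t x) \<partial>M) \<le> ennreal \<alpha>"
  proof (cases "t = 0")
    case True
    then show ?thesis by (simp add: star_zero)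
  next
    case False
    have L: "AE x in M. mem_FDP_hat_SAFFRON d dl e al lam t x \<le> \<alpha>" using bound False by simp
    have "(\<integral>\<^sup>+ x. ennreal (mem_FDP_star null d dl al t x) \<partial>M)
       \<le> (\<integral>\<^sup>+ x. ennreal (mem_FDP_hat_SAFFRON d dl e al lam t x) \<partial>M)"
      by (rule partB1[OF lam_meas lam_b])
    also have "\<dots> \<le> ennreal \<alpha>" by (rule int_le_const[OF L])
    finally show ?thesis .
  qed
qed

end

theorem proposition3:
  fixes M :: "'a measure" and null :: "nat \<Rightarrow> bool"
    and e al :: "nat \<Rightarrow> 'a \<Rightarrow> real" and \<alpha> d :: real
  defines "\<delta> \<equiv> decision e al"
  defines "F \<equiv> filt M \<delta>"
  assumes M: "prob_space M"
    and \<alpha>: "0 < \<alpha>" "\<alpha> < 1"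
    and d: "0 < d" "d \<le> 1"
    and e_meas: "\<And>t. e t \<in> borel_measurable M"
    and e_nonneg: "\<And>t \<omega>. \<omega> \<in> space M \<Longrightarrow> 0 \<le> e t \<omega>"
    and al_meas: "\<And>t. t \<ge> 1 \<Longrightarrow> al t \<in> borel_measurable (F (t - 1))"
    and al_nonneg: "\<And>t \<omega>. \<omega> \<in> space M \<Longrightarrow> 0 \<le> al t \<omega>"
    and valid: "\<And>t. t \<ge> 1 \<Longrightarrow> null t \<Longrightarrow>
        AE \<omega> in M. nn_cond_exp M (F (t - 1)) (\<lambda>x. ennreal (e t x)) \<omega> \<le> 1"
  shows
    "((\<forall>t\<ge>1. AE \<omega> in M. mem_FDP_hat_LORD d \<delta> al t \<omega> \<le> \<alpha>)
        \<longrightarrow> (\<forall>t. mem_FDR M null d \<delta> t \<le> \<alpha>))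
     \<and> (\<forall>lam :: nat \<Rightarrow> 'a \<Rightarrow> real.
          (\<forall>t\<ge>1. lam t \<in> borel_measurable (F (t - 1)))
          \<and> (\<forall>t\<ge>1. \<forall>\<omega>\<in>space M. 0 < lam t \<omega> \<and> lam t \<omega> < 1)
        \<longrightarrow> (\<forall>t. (\<integral>\<^sup>+ \<omega>. ennreal (mem_FDP_hat_SAFFRON d \<delta> e al lam t \<omega>) \<partial>M)
                  \<ge> (\<integral>\<^sup>+ \<omega>. ennreal (mem_FDP_star null d \<delta> al t \<omega>) \<partial>M))
          \<and> ((\<forall>t\<ge>1. AE \<omega> in M. mem_FDP_hat_SAFFRON d \<delta> e al lam t \<omega> \<le> \<alpha>)
              \<longrightarrow> (\<forall>t. mem_FDR M null d \<delta> t \<le> \<alpha>)))"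
proof -
  interpret fdr_setup M null e al d
    by (intro fdr_setup.intro fdr_setup_axioms.intro M)
       (use d e_meas e_nonneg al_meas al_nonneg valid in \<open>simp_all add: \<delta>_def F_def\<close>)
  show ?thesis
    unfolding \<delta>_def F_def
  proof (intro conjI impI allI)
    fix t
    assume "\<forall>t\<ge>1. AE \<omega> in M. mem_FDP_hat_LORD d dl al t \<omega> \<le> \<alpha>"
    then show "mem_FDR M null d dl t \<le> \<alpha>" by (rule partA[OF \<alpha>(1)])
  next
    fix lam :: "nat \<Rightarrow> 'a \<Rightarrow> real" and t
    assume h: "(\<forall>t\<ge>1. lam t \<in> borel_measurable (FF (t - 1))) \<and>
               (\<forall>t\<ge>1. \<forall>\<omega>\<in>space M. 0 < lam t \<omega> \<and> lam t \<omega> < 1)"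
    show "(\<integral>\<^sup>+ \<omega>. ennreal (mem_FDP_star null d dl al t \<omega>) \<partial>M)
        \<le> (\<integral>\<^sup>+ \<omega>. ennreal (mem_FDP_hat_SAFFRON d dl e al lam t \<omega>) \<partial>M)"
      by (rule partB1) (use h in auto)
  next
    fix lam :: "nat \<Rightarrow> 'a \<Rightarrow> real" and t
    assume h: "(\<forall>t\<ge>1. lam t \<in> borel_measurable (FF (t - 1))) \<and>
               (\<forall>t\<ge>1. \<forall>\<omega>\<in>space M. 0 < lam t \<omega> \<and> lam t \<omega> < 1)"
      and b: "\<forall>t\<ge>1. AE \<omega> in M. mem_FDP_hat_SAFFRON d dl e al lam t \<omega> \<le> \<alpha>"
    show "mem_FDR M null d dl t \<le> \<alpha>"
      by (rule partB2[OF \<alpha>(1) _ _ b]) (use h in auto)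
  qed
qed

end
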